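(* Let $p,q$ be positive integers, $e\in\mathbb{R}^p$ the vector of all ones, and let $(z,w)\in\mathbb{R}^p\times\mathbb{R}^q$ satisfy $z^+\not\ge\|w\|e$ and $\langle z^-,e\rangle<\|w\|$. For $\lambda\ge0$ let $N(\lambda):=\operatorname{diag}\big(-\operatorname{sgn}([(\lambda+1)z-\|w\|e]^-)\big)$. Given $\lambda_0>0$, define the sequence $\{\lambda_k\}$ by $N_k:=N(\lambda_k)$ and $$\big[-\|w\|+\langle e,N_kz\rangle\big]\lambda_{k+1}=-\langle e,N_k[z-\|w\|e]\rangle,\qquad k=0,1,\ldots.$$ Then for any $\lambda_0>0$ the sequence $\{\lambda_k\}$ is well defined and converges after at most $2^p$ steps to the unique solution $\lambda_*>0$ of the equation $$\lambda\|w\|=\left\langle e,[(\lambda+1)z-\|w\|e]^-\right\rangle.$$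
   Context: For $\alpha\in\mathbb{R}$, $\alpha^+:=\max(\alpha,0)$ and $\alpha^-:=\max(-\alpha,0)$; for vectors $z^+$, $z^-$ and $\operatorname{sgn}(z)$ are taken componentwise (with $\operatorname{sgn}(0)=0$), and $\operatorname{diag}(z)$ is the diagonal matrix with diagonal $z_1,\dots,z_p$. The order $\ge$ is componentwise; $z^+\not\ge\|w\|e$ means that $z^+\ge\|w\|e$ fails. (This sequence is the semi-smooth Newton method for the convex piecewise linear function $\psi(\lambda)=-\lambda\|w\|+\langle e,[(\lambda+1)z-\|w\|e]^-\rangle$.) *)

theory Defs
  imports "HOL-Analysis.Analysis"
begin

definition negpart :: "real \<Rightarrow> real" where "negpart a = max (- a) 0"
definition pospart :: "real \<Rightarrow> real" where "pospart a = max a 0"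

definition vneg :: "real^'n \<Rightarrow> real^'n" where "vneg x = (\<chi> i. negpart (x $ i))"
definition vpos :: "real^'n \<Rightarrow> real^'n" where "vpos x = (\<chi> i. pospart (x $ i))"

definition ones :: "real^'n" where "ones = (\<chi> i. 1)"

definition diagm :: "real^'n \<Rightarrow> real^'n^'n" where
  "diagm d = (\<chi> i j. if i = j then d $ i else 0)"

definition Nmat :: "real^'p \<Rightarrow> real^'q \<Rightarrow> real \<Rightarrow> real^'p^'p" where
  "Nmat z w l = diagm (- (\<chi> i. sgn (vneg ((l + 1) *\<^sub>R z - norm w *\<^sub>R ones) $ i)))"

definition ncoef :: "real^'p \<Rightarrow> real^'q \<Rightarrow> real \<Rightarrow> real" where
  "ncoef z w l = - norm w + ones \<bullet> (Nmat z w l *v z)"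

definition nrhs :: "real^'p \<Rightarrow> real^'q \<Rightarrow> real \<Rightarrow> real" where
  "nrhs z w l = - (ones \<bullet> (Nmat z w l *v (z - norm w *\<^sub>R ones)))"

fun lamseq :: "real^'p \<Rightarrow> real^'q \<Rightarrow> real \<Rightarrow> nat \<Rightarrow> real" where
  "lamseq z w l0 0 = l0"
| "lamseq z w l0 (Suc k) = nrhs z w (lamseq z w l0 k) / ncoef z w (lamseq z w l0 k)"

end

theory Submission
  imports Defs
begin
definition Iset :: "real^'p \<Rightarrow> real^'q \<Rightarrow> real \<Rightarrow> 'p set" where
  "Iset z w l = {i. (l+1) * z$i < norm w}"

lemma ones_inner: "ones \<bullet> v = (\<Sum>i\<in>UNIV. v$i)"
  by (simp add: inner_vec_def ones_def)

lemma diag_apply: "(diagm d *v x) $ i = d$i * x$i"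
proof -
  have "(diagm d *v x) $ i = (\<Sum>j\<in>UNIV. (if i = j then d $ i else 0) * x $ j)"
    unfolding diagm_def matrix_vector_mult_def by simp
  also have "\<dots> = (\<Sum>j\<in>UNIV. (if j = i then d$i * x$i else 0))"
    by (rule sum.cong) auto
  finally show ?thesis by simp
qed

lemma nm_apply: "(Nmat z w l *v x) $ i = (if i \<in> Iset z w l then - x$i else 0)"
  unfolding Nmat_def diag_apply
  by (simp add: vneg_def negpart_def ones_def Iset_def sgn_if)

lemma ncoef_eq: "ncoef z w l = - norm w - sum (\<lambda>i. z$i) (Iset z w l)"
  unfolding ncoef_def ones_inner nm_apply
  by (simp add: sum.If_cases sum_negf)

lemma nrhs_eq: "nrhs z w l = sum (\<lambda>i. z$i - norm w) (Iset z w l)"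
  unfolding nrhs_def ones_inner nm_apply
  by (simp add: sum.If_cases sum_negf ones_def flip: sum_negf)

lemma g_eq: "ones \<bullet> vneg ((l + 1) *\<^sub>R z - norm w *\<^sub>R ones) = sum (\<lambda>i. norm w - (l+1) * z$i) (Iset z w l)"
proof -
  have "ones \<bullet> vneg ((l + 1) *\<^sub>R z - norm w *\<^sub>R ones) = (\<Sum>i\<in>UNIV. if i \<in> Iset z w l then norm w - (l+1) * z$i else 0)"
    unfolding ones_inner vneg_def negpart_def
    by (auto simp: ones_def Iset_def intro!: sum.cong)
  then show ?thesis by (simp add: sum.If_cases)
qed
lemma g_eq2: "ones \<bullet> vneg ((l + 1) *\<^sub>R z - norm w *\<^sub>R ones) = (\<Sum>i\<in>UNIV. max (norm w - (l+1) * z$i) 0)"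
  unfolding ones_inner vneg_def negpart_def by (simp add: ones_def)

definition psi :: "real^'p \<Rightarrow> real^'q \<Rightarrow> real \<Rightarrow> real" where
  "psi z w l = ones \<bullet> vneg ((l + 1) *\<^sub>R z - norm w *\<^sub>R ones) - l * norm w"

definition Lf :: "real^'p \<Rightarrow> real^'q \<Rightarrow> 'p set \<Rightarrow> real \<Rightarrow> real" where
  "Lf z w S l = (\<Sum>i\<in>S. norm w - (l+1) * z$i) - l * norm w"

definition cS :: "real^'p \<Rightarrow> real^'q \<Rightarrow> 'p set \<Rightarrow> real" where
  "cS z w S = norm w + (\<Sum>i\<in>S. z$i)"

lemma Lf_le: "Lf z w S l \<le> psi z w l"
proof -
  have "(\<Sum>i\<in>S. norm w - (l+1) * z$i) \<le> (\<Sum>i\<in>S. max (norm w - (l+1) * z$i) 0)"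
    by (rule sum_mono) simp
  also have "\<dots> \<le> (\<Sum>i\<in>UNIV. max (norm w - (l+1) * z$i) 0)"
    by (rule sum_mono2) auto
  finally show ?thesis unfolding Lf_def psi_def g_eq2 by simp
qed

lemma Lf_alt: "Lf z w S l = (\<Sum>i\<in>S. norm w - z$i) - l * cS z w S"
  unfolding Lf_def cS_def by (simp add: algebra_simps sum_subtractf sum_distrib_left sum.distrib)

lemma psi_Lf: "psi z w l = Lf z w (Iset z w l) l"
  unfolding psi_def Lf_def g_eq by simp

lemma Lf_cS: "cS z w S > 0 \<Longrightarrow> Lf z w S ((\<Sum>i\<in>S. norm w - z$i) / cS z w S) = 0"
  unfolding Lf_alt by simp

lemma psi_strict: 
  assumes "\<And>S. cS z w S > 0" "l1 < l2" shows "psi z w l2 < psi z w l1"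
proof -
  let ?S = "Iset z w l2"
  have "psi z w l2 = Lf z w ?S l2" by (rule psi_Lf)
  also have "\<dots> < Lf z w ?S l1"
    unfolding Lf_alt using assms(2) mult_strict_right_mono[OF assms(2) assms(1)[of ?S]] by simp
  also have "\<dots> \<le> psi z w l1" by (rule Lf_le)
  finally show ?thesis .
qed

lemma lam_suc: 
  assumes "cS z w (Iset z w (lamseq z w l0 k)) > 0"
  shows "lamseq z w l0 (Suc k) = (\<Sum>i\<in>Iset z w (lamseq z w l0 k). norm w - z$i) / cS z w (Iset z w (lamseq z w l0 k))"
proof -
  let ?S = "Iset z w (lamseq z w l0 k)"
  have "lamseq z w l0 (Suc k) = (\<Sum>i\<in>?S. z$i - norm w) / (- norm w - sum (\<lambda>i. z$i) ?S)"
    by (simp add: nrhs_eq ncoef_eq)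
  also have "\<dots> = (- (\<Sum>i\<in>?S. norm w - z$i)) / (- cS z w ?S)"
    by (simp add: cS_def sum_subtractf)
  finally show ?thesis by simp
qed

lemma lam_step:
  assumes "cS z w (Iset z w (lamseq z w l0 k)) > 0"
  shows "lamseq z w l0 (Suc k) = lamseq z w l0 k + psi z w (lamseq z w l0 k) / cS z w (Iset z w (lamseq z w l0 k))"
  unfolding lam_suc[OF assms] psi_Lf Lf_alt using assms by (simp add: field_simps)

lemma psi_suc_nonneg:
  assumes "cS z w (Iset z w (lamseq z w l0 k)) > 0"
  shows "psi z w (lamseq z w l0 (Suc k)) \<ge> 0"
  using Lf_le[of z w "Iset z w (lamseq z w l0 k)" "lamseq z w l0 (Suc k)"]
  unfolding lam_suc[OF assms] Lf_cS[OF assms] by simp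

lemma Iset_mono: "0 < norm w \<Longrightarrow> 0 \<le> l \<Longrightarrow> l \<le> l' \<Longrightarrow> Iset z w l' \<subseteq> Iset z w l"
  unfolding Iset_def
proof safe
  fix i assume h0: "0 < norm w" and h: "0 \<le> l" "l \<le> l'" "(l' + 1) * z $ i < norm w"
  show "(l + 1) * z $ i < norm w"
  proof (cases "z$i \<le> 0")
    case True then show ?thesis using h(1) h0
      by (smt (verit) mult_nonneg_nonpos)
  next
    case False then have "(l + 1) * z $ i \<le> (l' + 1) * z $ i" using h by (intro mult_right_mono) auto
    then show ?thesis using h by simp
  qed
qed

lemma num_nonneg: "0 \<le> l \<Longrightarrow> 0 \<le> (\<Sum>i\<in>Iset z w l. norm w - z$i)"
proof (rule sum_nonneg)
  fix i assume "0 \<le> l" "i \<in> Iset z w l"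
  then have h: "(l + 1) * z $ i < norm w" by (simp add: Iset_def)
  show "0 \<le> norm w - z $ i"
  proof (cases "z$i \<le> 0")
    case True then show ?thesis by (smt (verit) norm_ge_zero)
  next
    case False then have "z$i \<le> (l + 1) * z $ i" using \<open>0 \<le> l\<close> by (simp add: algebra_simps)
    then show ?thesis using h by simp
  qed
qed


theorem proposition3:
  fixes z :: "real^'p" and w :: "real^'q"
  assumes "\<not> (\<forall>i. vpos z $ i \<ge> norm w)"
    and "vneg z \<bullet> ones < norm w"
  shows "\<exists>ls. (ls > 0 \<and> ls * norm w = ones \<bullet> vneg ((ls + 1) *\<^sub>R z - norm w *\<^sub>R ones))
     \<and> (\<forall>l. l > 0 \<and> l * norm w = ones \<bullet> vneg ((l + 1) *\<^sub>R z - norm w *\<^sub>R ones) \<longrightarrow> l = ls)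
     \<and> (\<forall>l0 > 0. (\<forall>k. 0 \<le> lamseq z w l0 k \<and> ncoef z w (lamseq z w l0 k) \<noteq> 0)
                 \<and> (\<forall>k \<ge> 2 ^ CARD('p). lamseq z w l0 k = ls))"
proof -
  let ?a = "norm w"
  have vz: "vneg z \<bullet> ones = (\<Sum>i\<in>UNIV. negpart (z$i))"
    by (simp add: inner_vec_def ones_def vneg_def)
  have "0 \<le> vneg z \<bullet> ones" unfolding vz by (rule sum_nonneg) (simp add: negpart_def)
  with assms(2) have apos: "0 < ?a" by linarith
  have cpos: "cS z w S > 0" for S
  proof -
    have "- (\<Sum>i\<in>UNIV. negpart (z$i)) \<le> - (\<Sum>i\<in>S. negpart (z$i))"
      by (simp, rule sum_mono2) (auto simp: negpart_def)
    also have "\<dots> \<le> (\<Sum>i\<in>S. z$i)"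
      by (simp add: sum_negf[symmetric], rule sum_mono) (simp add: negpart_def)
    finally show ?thesis using assms(2) unfolding vz cS_def by simp
  qed
  obtain j where j: "vpos z $ j < ?a" using assms(1) by (auto simp: not_le)
  have psi0: "psi z w 0 > 0"
  proof -
    have "z$j < ?a" using j by (simp add: vpos_def pospart_def)
    then have "0 < max (?a - (0+1) * z$j) 0" by simp
    also have "\<dots> \<le> (\<Sum>i\<in>UNIV. max (?a - (0+1) * z$i) 0)"
      by (rule member_le_sum) auto
    finally show ?thesis unfolding psi_def g_eq2 by simp
  qed
  have strict: "l1 < l2 \<Longrightarrow> psi z w l2 < psi z w l1" for l1 l2
    by (rule psi_strict[OF cpos])
  have uniq: "psi z w l1 = 0 \<Longrightarrow> psi z w l2 = 0 \<Longrightarrow> l1 = l2" for l1 l2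
    using strict[of l1 l2] strict[of l2 l1] by (cases l1 l2 rule: linorder_cases) auto
  have nonneg: "0 \<le> lamseq z w l0 k" if "0 \<le> l0" for l0 k
  proof (induction k)
    case 0 then show ?case using that by simp
  next
    case (Suc k)
    show ?case unfolding lam_suc[OF cpos]
      using num_nonneg[OF Suc, where z=z and w=w] cpos[of "Iset z w (lamseq z w l0 k)"] by simp
  qed
  have conv: "psi z w (lamseq z w l0 (Suc k)) = 0 \<or> card (Iset z w (lamseq z w l0 (Suc k))) + k \<le> CARD('p)"
    if "0 \<le> l0" for l0 k
  proof (induction k)
    case 0 then show ?case by (simp add: card_mono[OF finite])
  next
    case (Suc k)
    let ?l1 = "lamseq z w l0 (Suc k)" and ?l2 = "lamseq z w l0 (Suc (Suc k))"
    show ?case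
    proof (cases "psi z w ?l1 = 0")
      case True
      then have "?l2 = ?l1" using lam_step[OF cpos, of l0 "Suc k"] by simp
      then show ?thesis using True by simp
    next
      case False
      with Suc have c: "card (Iset z w ?l1) + k \<le> CARD('p)" by simp
      have "psi z w ?l1 \<ge> 0" by (rule psi_suc_nonneg[OF cpos])
      then have "?l1 \<le> ?l2" using lam_step[OF cpos, of l0 "Suc k"] cpos
        by (simp add: divide_nonneg_pos)
      then have sub: "Iset z w ?l2 \<subseteq> Iset z w ?l1"
        using Iset_mono[OF apos nonneg[OF that]] by blast
      show ?thesis
      proof (cases "Iset z w ?l2 = Iset z w ?l1")
        case True
        have "psi z w ?l2 = Lf z w (Iset z w ?l1) ?l2" using True psi_Lf by metis
        also have "\<dots> = 0" unfolding lam_suc[OF cpos, of l0 "Suc k"] by (rule Lf_cS[OF cpos])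
        finally show ?thesis by simp
      next
        case False
        then have "card (Iset z w ?l2) < card (Iset z w ?l1)"
          using sub by (intro psubset_card_mono) auto
        then show ?thesis using c by simp
      qed
    qed
  qed
  have ne: "Iset z w l \<noteq> {}" if "0 \<le> l" "psi z w l \<ge> 0" for l
  proof
    assume e: "Iset z w l = {}"
    then have "psi z w l = - l * ?a" unfolding psi_Lf Lf_def by simp
    with that apos have "l * ?a \<le> 0" by simp
    with that apos have "l = 0" using mult_pos_pos[of l ?a] by linarith
    with e psi0 show False unfolding psi_Lf Lf_def by simp
  qed
  have root: "psi z w (lamseq z w l0 (Suc CARD('p))) = 0" if "0 \<le> l0" for l0
  proof (rule ccontr)
    assume h: "\<not> ?thesis"
    with conv[OF that, of "CARD('p)"] have "card (Iset z w (lamseq z w l0 (Suc CARD('p)))) = 0" by simp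
    then have "Iset z w (lamseq z w l0 (Suc CARD('p))) = {}" by simp
    with ne[OF nonneg[OF that] psi_suc_nonneg[OF cpos]] show False by blast
  qed
  have stay: "lamseq z w l0 (Suc CARD('p) + m) = lamseq z w l0 (Suc CARD('p))" if "0 \<le> l0" for l0 m
  proof (induction m)
    case 0 then show ?case by simp
  next
    case (Suc m)
    have "psi z w (lamseq z w l0 (Suc CARD('p) + m)) = 0" using Suc root[OF that] by simp
    then show ?case using lam_step[OF cpos, of l0 "Suc CARD('p) + m"] Suc by simp
  qed
  define ls where "ls = lamseq z w 1 (Suc CARD('p))"
  have psls: "psi z w ls = 0" unfolding ls_def by (rule root) simp
  have lspos: "ls > 0"
  proof -
    have "ls \<ge> 0" unfolding ls_def by (rule nonneg) simp
    moreover have "ls \<noteq> 0" using psls psi0 by auto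
    ultimately show ?thesis by simp
  qed
  have eqiff: "l * ?a = ones \<bullet> vneg ((l + 1) *\<^sub>R z - ?a *\<^sub>R ones) \<longleftrightarrow> psi z w l = 0" for l
    unfolding psi_def by auto
  show ?thesis
  proof (intro exI[of _ ls] conjI allI impI)
    show "ls > 0" by (rule lspos)
    show "ls * ?a = ones \<bullet> vneg ((ls + 1) *\<^sub>R z - ?a *\<^sub>R ones)" using psls eqiff by simp
  next
    fix l assume "0 < l \<and> l * ?a = ones \<bullet> vneg ((l + 1) *\<^sub>R z - ?a *\<^sub>R ones)"
    then show "l = ls" using eqiff uniq psls by blast
  next
    fix l0 k :: real assume "l0 > 0" then have l0: "0 \<le> l0" by simp
    fix k show "0 \<le> lamseq z w l0 k" by (rule nonneg[OF l0])
    show "ncoef z w (lamseq z w l0 k) \<noteq> 0"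
      using cpos[of "Iset z w (lamseq z w l0 k)"] unfolding ncoef_eq cS_def by linarith
  next
    fix l0 :: real and k :: nat assume "l0 > 0" "2 ^ CARD('p) \<le> k"
    then have l0: "0 \<le> l0" by simp
    have "Suc CARD('p) \<le> 2 ^ CARD('p)" using less_exp[of "CARD('p)"] by (simp only: Suc_le_eq)
    with \<open>2 ^ CARD('p) \<le> k\<close> have "Suc CARD('p) \<le> k" by linarith
    then obtain m where m: "k = Suc CARD('p) + m"
      using le_Suc_ex by blast
    have "lamseq z w l0 k = lamseq z w l0 (Suc CARD('p))" unfolding m by (rule stay[OF l0])
    also have "\<dots> = ls" using uniq[OF root[OF l0] psls] .
    finally show "lamseq z w l0 k = ls" .
  qed
qed

end
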